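(* Let $2\le n\le N$ and $\delta\in(0,1]$. With probability at least $1-\delta$, \[ \max_{1\le k\le n}\sigma^2_{>,k}\le \sigma^2+\frac{\sigma(b-a)(n-1)}{N-n+1}\sqrt{\frac{2\log(1/\delta)}{n-1}}. \] Similarly, if $1\le n\le N-2$, then with probability at least $1-\delta$, \[ \max_{n\le k\le N-1}\sigma^2_{<,k+1}\le \sigma^2+\frac{\sigma(b-a)(N-n-1)}{n+1}\sqrt{\frac{2\log(1/\delta)}{N-n-1}}. \]
   Context: Let $N\ge 2$ and let $\mathcal X=(x_1,\dots,x_N)$ be a finite population of real numbers (repetitions allowed). Let $(X_1,\dots,X_N)=(x_{\pi(1)},\dots,x_{\pi(N)})$, where $\pi$ is a uniformly random permutation of $\{1,\dots,N\}$. For $n\le N$, $(X_1,\dots,X_n)$ is therefore a sample of size $n$ drawn uniformly without replacement from $\mathcal X$. Let $\mu=\frac1N\sum_{i=1}^N x_i$, $\sigma^2=\frac1N\sum_{i=1}^N(x_i-\mu)^2$, $\sigma=\sqrt{\sigma^2}$, $a=\min_i x_i$ and $b=\max_i x_i$. Define the conditional variances \[ \sigma^2_{>,k}=\operatorname{Var}\big(X_k\mid X_1,\dots,X_{k-1}\big)\quad(1\le k\le N),\qquad \sigma^2_{<,j}=\operatorname{Var}\big(X_j\mid X_{j+1},\dots,X_N\big)\quad(1\le j\le N), \] with conditioning on the trivial $\sigma$-algebra when the list of conditioning variables is empty. *)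

theory Defs
  imports "HOL-Probability.Probability"
begin

text \<open>Population x 1, ..., x N (indices 1..N). The sample space is the set of
permutations of {1..N}, equipped with the uniform distribution; the k-th draw is
X k pi = x (pi k).\<close>

definition perms :: "nat \<Rightarrow> (nat \<Rightarrow> nat) set" where
  "perms N = {p. p permutes {1..N}}"

definition perm_pmf :: "nat \<Rightarrow> (nat \<Rightarrow> nat) pmf" where
  "perm_pmf N = pmf_of_set (perms N)"

definition draw :: "(nat \<Rightarrow> real) \<Rightarrow> nat \<Rightarrow> (nat \<Rightarrow> nat) \<Rightarrow> real" where
  "draw x k p = x (p k)"

definition pop_mean :: "nat \<Rightarrow> (nat \<Rightarrow> real) \<Rightarrow> real" where
  "pop_mean N x = (\<Sum>i=1..N. x i) / real N"

definition pop_var :: "nat \<Rightarrow> (nat \<Rightarrow> real) \<Rightarrow> real" where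
  "pop_var N x = (\<Sum>i=1..N. (x i - pop_mean N x)^2) / real N"

definition pop_min :: "nat \<Rightarrow> (nat \<Rightarrow> real) \<Rightarrow> real" where
  "pop_min N x = Min (x ` {1..N})"

definition pop_max :: "nat \<Rightarrow> (nat \<Rightarrow> real) \<Rightarrow> real" where
  "pop_max N x = Max (x ` {1..N})"

text \<open>The atom of the (finite) sigma-algebra generated by the draws X_i, i in J,
containing the outcome p.\<close>
definition atom :: "nat \<Rightarrow> (nat \<Rightarrow> real) \<Rightarrow> nat set \<Rightarrow> (nat \<Rightarrow> nat) \<Rightarrow> (nat \<Rightarrow> nat) set" where
  "atom N x J p = {q \<in> perms N. \<forall>i\<in>J. draw x i q = draw x i p}"

definition cond_exp :: "nat \<Rightarrow> (nat \<Rightarrow> real) \<Rightarrow> nat set \<Rightarrow> ((nat \<Rightarrow> nat) \<Rightarrow> real) \<Rightarrow> (nat \<Rightarrow> nat) \<Rightarrow> real" where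
  "cond_exp N x J f p = (\<Sum>q\<in>atom N x J p. f q) / real (card (atom N x J p))"

definition cond_var :: "nat \<Rightarrow> (nat \<Rightarrow> real) \<Rightarrow> nat set \<Rightarrow> ((nat \<Rightarrow> nat) \<Rightarrow> real) \<Rightarrow> (nat \<Rightarrow> nat) \<Rightarrow> real" where
  "cond_var N x J f p = cond_exp N x J (\<lambda>q. (f q - cond_exp N x J f q)^2) p"

text \<open>sigma^2_{>,k} = Var(X_k | X_1..X_{k-1}),  sigma^2_{<,j} = Var(X_j | X_{j+1}..X_N).\<close>
definition var_fwd :: "nat \<Rightarrow> (nat \<Rightarrow> real) \<Rightarrow> nat \<Rightarrow> (nat \<Rightarrow> nat) \<Rightarrow> real" where
  "var_fwd N x k = cond_var N x {1..<k} (draw x k)"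

definition var_bwd :: "nat \<Rightarrow> (nat \<Rightarrow> real) \<Rightarrow> nat \<Rightarrow> (nat \<Rightarrow> nat) \<Rightarrow> real" where
  "var_bwd N x j = cond_var N x {j<..N} (draw x j)"

end

theory Submission
  imports Defs
begin


lemma exp_neg_le_quad:
  fixes t :: real assumes "0 \<le> t"
  shows "exp (- t) \<le> 1 - t + t^2/2"
proof -
  let ?f = "\<lambda>t::real. 1 - t + t^2/2 - exp (- t)"
  have d: "\<And>t. (?f has_real_derivative (-1 + t + exp (-t))) (at t)"
    by (auto intro!: derivative_eq_intros simp: power2_eq_square)
  have "?f 0 \<le> ?f t"
  proof (rule DERIV_nonneg_imp_nondecreasing[OF assms])
    fix s :: real assume "0 \<le> s" "s \<le> t"
    show "\<exists>y. (?f has_real_derivative y) (at s) \<and> 0 \<le> y"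
      using d[of s] exp_ge_add_one_self[of "-s"] by (intro exI[of _ "-1 + s + exp (-s)"]) auto
  qed
  thus ?thesis by simp
qed

lemma K_ineq:
  fixes w :: real assumes "0 \<le> w"
  shows "real r * (1 - w) * w^r \<le> 1 - w^r"
proof (induction r)
  case 0 then show ?case by simp
next
  case (Suc r)
  have "real (Suc r) * (1 - w) * w ^ Suc r = real (Suc r) * (1-w) * w^r - real (Suc r) * (1-w)^2 * w^r"
    by (simp add: power2_eq_square algebra_simps)
  also have "\<dots> \<le> real (Suc r) * (1-w) * w^r"
    using assms by simp
  also have "\<dots> = real r * (1 - w) * w^r + (1-w) * w^r" by (simp add: algebra_simps)
  also have "\<dots> \<le> 1 - w^r + (1-w)*w^r" using Suc by simp
  also have "\<dots> = 1 - w^Suc r" by (simp add: algebra_simps)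
  finally show ?case .
qed

lemma S_ineq:
  fixes w :: real assumes "0 \<le> w"
  shows "0 \<le> (1 - w) * (1 - w^r)"
proof (cases "w \<le> 1")
  case True
  then have "w^r \<le> 1" using assms by (simp add: power_le_one)
  then show ?thesis using True by simp
next
  case False
  then have "1 \<le> w^r" by (simp add: one_le_power)
  then show ?thesis using False by (simp add: mult_nonpos_nonpos)
qed

lemma core_ineq:
  fixes w M :: real assumes "0 \<le> w" "real r \<le> M"
  shows "(1 + M * (1 - w)) * w^r \<le> 1 + (M - real r) * (1 - w)"
proof -
  have k: "real r * (1 - w) * w^r \<le> 1 - w^r" by (rule K_ineq[OF assms(1)])
  have s: "0 \<le> (1 - w) * (1 - w^r)" by (rule S_ineq[OF assms(1)])
  have "real r * ((1 - w) * (1 - w^r)) \<le> M * ((1 - w) * (1 - w^r))"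
    using s assms(2) by (intro mult_right_mono) auto
  then show ?thesis using k by (simp add: algebra_simps)
qed

lemma tangent_pt:
  fixes h A :: real and m r :: nat
  assumes "0 \<le> h" "h \<le> A" "2 \<le> m" "r \<le> m - 1"
  shows "h * ((A - h) / (real m - 1))^r \<le> (A/real m)^(Suc r) + (A/real m)^r * (1 - real r / (real m - 1)) * (h - A/real m)"
proof (cases "A = 0")
  case True then show ?thesis using assms by simp
next
  case False
  then have A0: "0 < A" using assms by simp
  define \<mu> where "\<mu> = A / real m"
  have mu0: "0 < \<mu>" using A0 assms by (simp add: \<mu>_def)
  define w where "w = (A - h) / (real m - 1) / \<mu>"
  have m1: "real m - 1 > 0" using assms by simp
  have w0: "0 \<le> w" using assms m1 mu0 by (simp add: w_def)
  have hw: "h = \<mu> * (1 + (real m - 1) * (1 - w))"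
    using m1 mu0 assms by (simp add: w_def \<mu>_def field_simps)
  have Aw: "(A - h) / (real m - 1) = \<mu> * w" using mu0 by (simp add: w_def)
  have rM: "real r \<le> real m - 1" using assms by linarith
  have c: "(1 + (real m - 1) * (1 - w)) * w^r \<le> 1 + (real m - 1 - real r) * (1 - w)"
    by (rule core_ineq[OF w0 rM])
  have "h * ((A - h) / (real m - 1))^r = \<mu>^Suc r * ((1 + (real m - 1) * (1 - w)) * w^r)"
  proof -
    have "h * ((A - h) / (real m - 1))^r = h * (\<mu> * w)^r" by (simp only: Aw)
    also have "\<dots> = \<mu>^Suc r * ((1 + (real m - 1) * (1 - w)) * w^r)"
      by (subst hw) (simp add: power_mult_distrib)
    finally show ?thesis .
  qed
  also have "\<dots> \<le> \<mu>^Suc r * (1 + (real m - 1 - real r) * (1 - w))"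
    using c mu0 by (intro mult_left_mono) auto
  also have "\<dots> = \<mu>^Suc r + \<mu>^r * (1 - real r / (real m - 1)) * (h - \<mu>)"
    using m1 by (simp add: hw field_simps)
  finally show ?thesis by (simp add: \<mu>_def)
qed


lemma tangent_sum:
  fixes h :: "nat \<Rightarrow> real"
  assumes fin: "finite B" and cB: "card B = m" and m1: "1 \<le> m"
    and h0: "\<And>b. b \<in> B \<Longrightarrow> 0 \<le> h b" and r: "r \<le> m - 1"
  shows "(\<Sum>b\<in>B. h b * ((sum h B - h b) / (real m - 1))^r) \<le> real m * (sum h B / real m)^Suc r"
proof (cases "m = 1")
  case True
  then show ?thesis using r by simp
next
  case False
  then have m2: "2 \<le> m" using m1 by simp
  let ?A = "sum h B"
  have hA: "h b \<le> ?A" if "b \<in> B" for b using member_le_sum[OF that] h0 fin by auto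
  have "(\<Sum>b\<in>B. h b * ((?A - h b) / (real m - 1))^r)
      \<le> (\<Sum>b\<in>B. (?A/real m)^(Suc r) + (?A/real m)^r * (1 - real r / (real m - 1)) * (h b - ?A/real m))"
    by (intro sum_mono tangent_pt h0 hA m2 r) auto
  also have "\<dots> = real m * (?A/real m)^(Suc r) + (?A/real m)^r * (1 - real r / (real m - 1)) * (?A - real m * (?A / real m))"
    by (simp add: sum.distrib sum_distrib_left[symmetric] sum_subtractf cB)
  also have "\<dots> = real m * (?A/real m)^(Suc r)" using m1 by simp
  finally show ?thesis .
qed

lemma jensen_exp:
  fixes f :: "'a \<Rightarrow> real"
  assumes "finite B" "B \<noteq> {}"
  shows "real (card B) * exp (sum f B / real (card B)) \<le> (\<Sum>b\<in>B. exp (f b))"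
proof -
  let ?c = "sum f B / real (card B)"
  have cpos: "0 < real (card B)" using assms by (simp add: card_gt_0_iff)
  have "(\<Sum>b\<in>B. exp ?c * (1 + (f b - ?c))) \<le> (\<Sum>b\<in>B. exp (f b))"
  proof (rule sum_mono)
    fix b assume "b \<in> B"
    have "exp ?c * (1 + (f b - ?c)) \<le> exp ?c * exp (f b - ?c)"
      by (intro mult_left_mono exp_ge_add_one_self) auto
    also have "\<dots> = exp (f b)" by (simp add: exp_diff)
    finally show "exp ?c * (1 + (f b - ?c)) \<le> exp (f b)" .
  qed
  moreover have "(\<Sum>b\<in>B. exp ?c * (1 + (f b - ?c))) = exp ?c * (real (card B) + sum f B - real (card B) * ?c)"
    by (simp add: sum_distrib_left[symmetric] sum.distrib sum_subtractf)
  moreover have "real (card B) * ?c = sum f B" using cpos by simp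
  ultimately show ?thesis by (simp add: mult.commute[of "real (card B)"])
qed

definition Zr :: "nat \<Rightarrow> (nat \<Rightarrow> real) \<Rightarrow> nat \<Rightarrow> nat \<Rightarrow> (nat \<Rightarrow> nat) \<Rightarrow> real" where
  "Zr N y k j p = (\<Sum>l\<in>{k+j..N}. y (p l)) / real (Suc N - (k+j))"

lemma sum_perm_eq:
  assumes "p permutes S"
  shows "(\<Sum>l\<in>S. f (p l)) = (\<Sum>l\<in>S. f l)"
  using sum.permute[OF assms, of f] by (simp add: o_def)

lemma Z0_const:
  assumes "p permutes {k..N}"
  shows "Zr N y k 0 p = (\<Sum>i\<in>{k..N}. y i) / real (Suc N - k)"
  using sum_perm_eq[OF assms, of y] by (simp add: Zr_def)

lemma Z_shift:
  "Zr N y k (Suc j) (Transposition.transpose k b \<circ> q) = Zr N (y \<circ> Transposition.transpose k b) (Suc k) j q"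
  by (simp add: Zr_def)

lemma sum_shift:
  fixes y :: "nat \<Rightarrow> real"
  assumes "b \<in> {k..N}"
  shows "(\<Sum>i\<in>{Suc k..N}. y (Transposition.transpose k b i)) = (\<Sum>i\<in>{k..N}. y i) - y b"
proof -
  have kN: "k \<le> N" using assms by simp
  have tp: "Transposition.transpose k b permutes {k..N}" using assms kN by (intro permutes_swap_id) auto
  have "(\<Sum>i\<in>{k..N}. y i) = (\<Sum>i\<in>{k..N}. y (Transposition.transpose k b i))"
    using sum_perm_eq[OF tp, of y] by simp
  also have "\<dots> = y b + (\<Sum>i\<in>{Suc k..N}. y (Transposition.transpose k b i))"
    using kN by (simp add: sum.atLeast_Suc_atMost)
  finally show ?thesis by linarith
qed

lemma ins_ivl: "k \<le> N \<Longrightarrow> {k..N} = insert k {Suc k..N}" by auto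

lemma card_perms_ivl: "card {p. p permutes {k..N}} = fact (Suc N - k)"
  by (rule card_permutations) auto

lemma submart:
  assumes "k + r \<le> N"
  shows "real (card {p. p permutes {k..N}}) * exp (lam * ((\<Sum>i\<in>{k..N}. y i) / real (Suc N - k)))
         \<le> (\<Sum>p\<in>{p. p permutes {k..N}}. exp (lam * Zr N y k r p))"
  using assms
proof (induction r arbitrary: k y)
  case 0
  have "(\<Sum>p\<in>{p. p permutes {k..N}}. exp (lam * Zr N y k 0 p))
      = (\<Sum>p\<in>{p. p permutes {k..N}}. exp (lam * ((\<Sum>i\<in>{k..N}. y i) / real (Suc N - k))))"
    by (intro sum.cong refl) (simp add: Z0_const)
  then show ?case by simp
next
  case (Suc r)
  have kN: "k \<le> N" using Suc.prems by simp
  define m where "m = Suc N - k"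
  have m2: "2 \<le> m" using Suc.prems by (simp add: m_def)
  define A where "A = (\<Sum>i\<in>{k..N}. y i)"
  let ?P' = "{p. p permutes {Suc k..N}}"
  have "(\<Sum>p\<in>{p. p permutes {k..N}}. exp (lam * Zr N y k (Suc r) p))
      = (\<Sum>b\<in>{k..N}. \<Sum>q\<in>?P'. exp (lam * Zr N y k (Suc r) (Transposition.transpose k b \<circ> q)))"
    using sum_over_permutations_insert[of "{Suc k..N}" k "\<lambda>p. exp (lam * Zr N y k (Suc r) p)"] kN
    by (simp add: ins_ivl[OF kN, symmetric])
  also have "\<dots> = (\<Sum>b\<in>{k..N}. \<Sum>q\<in>?P'. exp (lam * Zr N (y \<circ> Transposition.transpose k b) (Suc k) r q))"
    by (simp add: Z_shift)
  also have "\<dots> \<ge> (\<Sum>b\<in>{k..N}. real (card ?P') * exp (lam * ((\<Sum>i\<in>{Suc k..N}. (y \<circ> Transposition.transpose k b) i) / real (Suc N - Suc k))))"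
    using Suc.prems by (intro sum_mono Suc.IH) auto
  also have "(\<Sum>b\<in>{k..N}. real (card ?P') * exp (lam * ((\<Sum>i\<in>{Suc k..N}. (y \<circ> Transposition.transpose k b) i) / real (Suc N - Suc k))))
      = real (card ?P') * (\<Sum>b\<in>{k..N}. exp (lam * ((A - y b) / (real m - 1))))"
    using m2 by (simp add: sum_distrib_left sum_shift A_def m_def of_nat_diff)
  also have "\<dots> \<ge> real (card ?P') * (real m * exp (lam * (A / real m)))"
  proof -
    have J1: "real (card {k..N}) * exp ((\<Sum>b\<in>{k..N}. lam * ((A - y b) / (real m - 1))) / real (card {k..N}))
        \<le> (\<Sum>b\<in>{k..N}. exp (lam * ((A - y b) / (real m - 1))))"
      using kN by (intro jensen_exp) auto
    have J2: "(\<Sum>b\<in>{k..N}. lam * ((A - y b) / (real m - 1))) / real (card {k..N}) = lam * (A / real m)"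
    proof -
      have cm: "card {k..N} = m" by (simp add: m_def)
      have rSN: "real (Suc N - k) = real N - real k + 1" using kN by (simp add: of_nat_diff)
      have "(\<Sum>b\<in>{k..N}. lam * ((A - y b) / (real m - 1))) = lam * ((real m * A - A) / (real m - 1))"
        using kN by (simp add: sum_distrib_left[symmetric] sum_divide_distrib[symmetric] sum_subtractf A_def m_def rSN)
      also have "\<dots> = lam * A" using m2 by (simp add: field_simps)
      finally show ?thesis using m2 by (simp add: m_def)
    qed
    have cm: "card {k..N} = m" by (simp add: m_def)
    from J1 have "real (card {k..N}) * exp (lam * (A / real m)) \<le> (\<Sum>b\<in>{k..N}. exp (lam * ((A - y b) / (real m - 1))))"
      by (simp only: J2)
    then have "real m * exp (lam * (A / real m)) \<le> (\<Sum>b\<in>{k..N}. exp (lam * ((A - y b) / (real m - 1))))"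
      by (simp only: cm)
    then show ?thesis by (intro mult_left_mono) auto
  qed
  also have "real (card ?P') * (real m * exp (lam * (A / real m)))
      = real (card {p. p permutes {k..N}}) * exp (lam * (A / real m))"
  proof -
    have "fact (Suc N - k) = (Suc N - k) * (fact (Suc N - Suc k) :: nat)"
      using m2 by (simp add: m_def fact_reduce)
    then show ?thesis by (simp add: card_perms_ivl m_def)
  qed
  finally show ?case by (simp only: A_def m_def)
qed




lemma doob:
  assumes "k + r \<le> N" "0 \<le> lam"
  shows "(\<Sum>p\<in>{p. p permutes {k..N}}. if (\<exists>j\<le>r. T < Zr N y k j p) then 1 else 0)
         \<le> exp (- lam * T) * (\<Sum>p\<in>{p. p permutes {k..N}}. exp (lam * Zr N y k r p))"
  using assms(1)
proof (induction r arbitrary: k y)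
  case 0
  have "(\<Sum>p\<in>{p. p permutes {k..N}}. if (\<exists>j\<le>0. T < Zr N y k j p) then 1 else 0)
      \<le> (\<Sum>p\<in>{p. p permutes {k..N}}. exp (- lam * T) * exp (lam * Zr N y k 0 p))"
  proof (rule sum_mono)
    fix p
    show "(if (\<exists>j\<le>0. T < Zr N y k j p) then 1 else 0) \<le> exp (- lam * T) * exp (lam * Zr N y k 0 p)"
    proof (cases "T < Zr N y k 0 p")
      case True
      then have "0 \<le> lam * Zr N y k 0 p - lam * T" using assms(2) by (simp add: mult_left_mono)
      then have "1 \<le> exp (lam * Zr N y k 0 p - lam * T)" by simp
      then show ?thesis using True by (simp add: exp_diff exp_minus field_simps)
    qed auto
  qed
  then show ?case by (simp add: sum_distrib_left)
next
  case (Suc r)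
  have kN: "k \<le> N" using Suc.prems by simp
  let ?P = "{p. p permutes {k..N}}"
  let ?P' = "{p. p permutes {Suc k..N}}"
  define A0 where "A0 = (\<Sum>i\<in>{k..N}. y i) / real (Suc N - k)"
  have finP: "finite ?P" by (simp add: finite_permutations)
  show ?case
  proof (cases "T < A0")
    case True
    have "(\<Sum>p\<in>?P. if (\<exists>j\<le>Suc r. T < Zr N y k j p) then 1 else 0) \<le> (\<Sum>p\<in>?P. (1::real))"
      by (intro sum_mono) auto
    also have "\<dots> = real (card ?P)" by simp
    also have "\<dots> \<le> exp (- lam * T) * (real (card ?P) * exp (lam * A0))"
    proof -
      have "0 \<le> lam * A0 - lam * T" using True assms(2) by (simp add: mult_left_mono)
      then have "1 \<le> exp (lam * A0 - lam * T)" by simp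
      then have "1 \<le> exp (- lam * T) * exp (lam * A0)" by (simp add: exp_diff exp_minus field_simps)
      then have "real (card ?P) * 1 \<le> real (card ?P) * (exp (- lam * T) * exp (lam * A0))"
        by (intro mult_left_mono) auto
      then show ?thesis by (simp add: algebra_simps)
    qed
    also have "\<dots> \<le> exp (- lam * T) * (\<Sum>p\<in>?P. exp (lam * Zr N y k (Suc r) p))"
      using submart[OF Suc.prems, of lam y] by (intro mult_left_mono) (auto simp: A0_def)
    finally show ?thesis .
  next
    case False
    have eq: "(\<exists>j\<le>Suc r. T < Zr N y k j p) = (\<exists>j\<le>r. T < Zr N y k (Suc j) p)" if "p \<in> ?P" for p
    proof -
      have "Zr N y k 0 p = A0" using that by (simp add: Z0_const A0_def)
      then have "\<not> T < Zr N y k 0 p" using False by simp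
      show ?thesis
      proof
        assume "\<exists>j\<le>Suc r. T < Zr N y k j p"
        then obtain j where j: "j \<le> Suc r" "T < Zr N y k j p" by blast
        with \<open>\<not> T < Zr N y k 0 p\<close> obtain i where "j = Suc i" by (cases j) auto
        then show "\<exists>j\<le>r. T < Zr N y k (Suc j) p" using j by auto
      next
        assume "\<exists>j\<le>r. T < Zr N y k (Suc j) p"
        then obtain j where "j \<le> r" "T < Zr N y k (Suc j) p" by blast
        then show "\<exists>j\<le>Suc r. T < Zr N y k j p" by (intro exI[of _ "Suc j"]) auto
      qed
    qed
    have "(\<Sum>p\<in>?P. if (\<exists>j\<le>Suc r. T < Zr N y k j p) then 1 else 0)
        = (\<Sum>p\<in>?P. if (\<exists>j\<le>r. T < Zr N y k (Suc j) p) then 1 else (0::real))"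
      using eq by (intro sum.cong) auto
    also have "\<dots> = (\<Sum>b\<in>{k..N}. \<Sum>q\<in>?P'. if (\<exists>j\<le>r. T < Zr N y k (Suc j) (Transposition.transpose k b \<circ> q)) then 1 else (0::real))"
      using sum_over_permutations_insert[of "{Suc k..N}" k "\<lambda>p. if (\<exists>j\<le>r. T < Zr N y k (Suc j) p) then 1 else (0::real)"] kN
      by (simp add: ins_ivl[OF kN, symmetric])
    also have "\<dots> = (\<Sum>b\<in>{k..N}. \<Sum>q\<in>?P'. if (\<exists>j\<le>r. T < Zr N (y \<circ> Transposition.transpose k b) (Suc k) j q) then 1 else (0::real))"
      by (simp add: Z_shift)
    also have "\<dots> \<le> (\<Sum>b\<in>{k..N}. exp (- lam * T) * (\<Sum>q\<in>?P'. exp (lam * Zr N (y \<circ> Transposition.transpose k b) (Suc k) r q)))"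
      using Suc.prems by (intro sum_mono Suc.IH) auto
    also have "\<dots> = exp (- lam * T) * (\<Sum>b\<in>{k..N}. \<Sum>q\<in>?P'. exp (lam * Zr N y k (Suc r) (Transposition.transpose k b \<circ> q)))"
      by (simp add: Z_shift sum_distrib_left)
    also have "\<dots> = exp (- lam * T) * (\<Sum>p\<in>?P. exp (lam * Zr N y k (Suc r) p))"
      using sum_over_permutations_insert[of "{Suc k..N}" k "\<lambda>p. exp (lam * Zr N y k (Suc r) p)"] kN
      by (simp add: ins_ivl[OF kN, symmetric])
    finally show ?thesis .
  qed
qed



lemma prodlem:
  fixes h :: "nat \<Rightarrow> real"
  assumes "k + r \<le> Suc N" "\<And>i. 0 \<le> h i"
  shows "(\<Sum>p\<in>{p. p permutes {k..N}}. \<Prod>l\<in>{k..<k+r}. h (p l))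
         \<le> real (card {p. p permutes {k..N}}) * ((\<Sum>i\<in>{k..N}. h i) / real (Suc N - k))^r"
  using assms
proof (induction r arbitrary: k h)
  case 0
  then show ?case by simp
next
  case (Suc r)
  have kN: "k \<le> N" using Suc.prems by simp
  let ?P = "{p. p permutes {k..N}}"
  let ?P' = "{p. p permutes {Suc k..N}}"
  define m where "m = Suc N - k"
  define A where "A = (\<Sum>i\<in>{k..N}. h i)"
  have m1: "1 \<le> m" using kN by (simp add: m_def)
  have rm: "r \<le> m - 1" using Suc.prems by (simp add: m_def)
  have pk: "(\<Prod>l\<in>{k..<k+Suc r}. f l) = f k * (\<Prod>l\<in>{Suc k..<Suc k+r}. f l)" for f :: "nat \<Rightarrow> real"
    using prod.atLeast_Suc_lessThan[of k "k+Suc r" f] by simp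
  have qk: "q k = k" if "q \<in> ?P'" for q using that by (auto intro: permutes_not_in)
  have "(\<Sum>p\<in>?P. \<Prod>l\<in>{k..<k+Suc r}. h (p l))
      = (\<Sum>b\<in>{k..N}. \<Sum>q\<in>?P'. \<Prod>l\<in>{k..<k+Suc r}. h ((Transposition.transpose k b \<circ> q) l))"
    using sum_over_permutations_insert[of "{Suc k..N}" k "\<lambda>p. \<Prod>l\<in>{k..<k+Suc r}. h (p l)"] kN
    by (simp add: ins_ivl[OF kN, symmetric])
  also have "\<dots> = (\<Sum>b\<in>{k..N}. h b * (\<Sum>q\<in>?P'. \<Prod>l\<in>{Suc k..<Suc k+r}. (h \<circ> Transposition.transpose k b) (q l)))"
  proof (intro sum.cong refl)
    fix b assume b: "b \<in> {k..N}"
    have "(\<Prod>l\<in>{k..<k+Suc r}. h ((Transposition.transpose k b \<circ> q) l))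
        = h b * (\<Prod>l\<in>{Suc k..<Suc k+r}. (h \<circ> Transposition.transpose k b) (q l))" if "q \<in> ?P'" for q
    proof -
      have "(\<Prod>l\<in>{k..<k+Suc r}. h ((Transposition.transpose k b \<circ> q) l))
          = h ((Transposition.transpose k b \<circ> q) k) * (\<Prod>l\<in>{Suc k..<Suc k+r}. h ((Transposition.transpose k b \<circ> q) l))"
        by (rule pk)
      also have "h ((Transposition.transpose k b \<circ> q) k) = h b" using qk[OF that] by simp
      finally show ?thesis by (simp add: o_def)
    qed
    then show "(\<Sum>q\<in>?P'. \<Prod>l\<in>{k..<k+Suc r}. h ((Transposition.transpose k b \<circ> q) l))
        = h b * (\<Sum>q\<in>?P'. \<Prod>l\<in>{Suc k..<Suc k+r}. (h \<circ> Transposition.transpose k b) (q l))"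
      by (simp add: sum_distrib_left)
  qed
  also have "\<dots> \<le> (\<Sum>b\<in>{k..N}. h b * (real (card ?P') * ((\<Sum>i\<in>{Suc k..N}. (h \<circ> Transposition.transpose k b) i) / real (Suc N - Suc k))^r))"
    using Suc.prems by (intro sum_mono mult_left_mono Suc.IH) auto
  also have "\<dots> = real (card ?P') * (\<Sum>b\<in>{k..N}. h b * ((A - h b) / (real m - 1))^r)"
  proof -
    have rSN: "real N - real k = real m - 1" using kN by (simp add: m_def of_nat_diff)
    have rSN2: "real (N - k) = real m - 1" using kN by (simp add: m_def of_nat_diff)
    show ?thesis by (simp add: sum_distrib_left sum_shift A_def rSN rSN2 algebra_simps)
  qed
  also have "\<dots> \<le> real (card ?P') * (real m * (A / real m)^Suc r)"
  proof -
    have cm: "card {k..N} = m" by (simp add: m_def)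
    have "(\<Sum>b\<in>{k..N}. h b * ((sum h {k..N} - h b) / (real m - 1))^r) \<le> real m * (sum h {k..N} / real m)^Suc r"
      by (rule tangent_sum[OF _ cm m1 _ rm]) (auto simp: Suc.prems)
    then show ?thesis by (intro mult_left_mono) (auto simp: A_def)
  qed
  also have "\<dots> = real (card ?P) * (A / real m)^Suc r"
  proof -
    have "fact (Suc N - k) = (Suc N - k) * (fact (Suc N - Suc k) :: nat)"
      using m1 kN by (simp add: fact_reduce)
    then show ?thesis by (simp add: card_perms_ivl m_def)
  qed
  finally show ?case by (simp only: A_def m_def)
qed




lemma var_le_sq:
  fixes f :: "'a \<Rightarrow> real"
  assumes "finite A" "A \<noteq> {}"
  shows "(\<Sum>q\<in>A. (f q - sum f A / real (card A))^2) \<le> (\<Sum>q\<in>A. (f q - c)^2)"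
proof -
  define e where "e = sum f A / real (card A)"
  have cpos: "0 < real (card A)" using assms by (simp add: card_gt_0_iff)
  have se: "sum f A = real (card A) * e" using cpos by (simp add: e_def)
  have pt: "(f q - c)^2 - (f q - e)^2 = (e - c) * (2 * f q - (c + e))" for q
    by (simp add: power2_eq_square algebra_simps)
  have "(\<Sum>q\<in>A. (f q - c)^2) - (\<Sum>q\<in>A. (f q - e)^2) = (\<Sum>q\<in>A. (e - c) * (2 * f q - (c + e)))"
    by (simp only: sum_subtractf[symmetric] pt)
  also have "\<dots> = (e - c) * (2 * sum f A - real (card A) * (c + e))"
  proof -
    have "(\<Sum>q\<in>A. (e - c) * (2 * f q - (c + e))) = (e - c) * (\<Sum>q\<in>A. (2 * f q - (c + e)))"
      by (simp only: sum_distrib_left)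
    also have "(\<Sum>q\<in>A. (2 * f q - (c + e))) = 2 * sum f A - real (card A) * (c + e)"
      by (simp add: sum_subtractf sum_distrib_left)
    finally show ?thesis .
  qed
  also have "\<dots> = real (card A) * (e - c)^2"
    by (simp add: se power2_eq_square algebra_simps)
  finally have "(\<Sum>q\<in>A. (f q - c)^2) - (\<Sum>q\<in>A. (f q - e)^2) = real (card A) * (e - c)^2" .
  moreover have "0 \<le> real (card A) * (e - c)^2" by simp
  ultimately have "(\<Sum>q\<in>A. (f q - e)^2) \<le> (\<Sum>q\<in>A. (f q - c)^2)" by linarith
  then show ?thesis by (simp add: e_def)
qed

lemma atom_self: "p \<in> perms N \<Longrightarrow> p \<in> atom N x J p"
  by (simp add: atom_def)

lemma atom_eq: "q \<in> atom N x J p \<Longrightarrow> atom N x J q = atom N x J p"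
  by (auto simp: atom_def)

lemma finite_perms: "finite (perms N)"
  by (simp add: perms_def finite_permutations)

lemma finite_atom: "finite (atom N x J p)"
  unfolding atom_def using finite_perms by (rule finite_subset[rotated]) auto

lemma cv_bound:
  assumes p: "p \<in> perms N" and J: "J \<subseteq> {1..N}" and t: "t \<in> {1..N}" "t \<notin> J"
  shows "cond_var N x J (draw x t) p \<le> (\<Sum>l\<in>{1..N}-J. (x (p l) - c)^2) / real (card ({1..N}-J))"
proof -
  define A where "A = atom N x J p"
  define R where "R = {1..N} - J"
  have finA: "finite A" by (simp add: A_def finite_atom)
  have pA: "p \<in> A" using p by (simp add: A_def atom_self)
  have Ane: "A \<noteq> {}" using pA by auto
  have cA: "0 < real (card A)" using finA Ane by (simp add: card_gt_0_iff)
  have tR: "t \<in> R" using t by (simp add: R_def)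
  have finR: "finite R" by (simp add: R_def)
  have cR: "0 < real (card R)" using finR tR by (simp add: card_gt_0_iff) blast
  define e where "e = cond_exp N x J (draw x t) p"
  have ce: "cond_exp N x J (draw x t) q = e" if "q \<in> A" for q
    using atom_eq[of q N x J p] that by (simp add: e_def cond_exp_def A_def)
  have cv: "cond_var N x J (draw x t) p = (\<Sum>q\<in>A. (x (q t) - sum (\<lambda>q. x (q t)) A / real (card A))^2) / real (card A)"
  proof -
    have "cond_var N x J (draw x t) p = (\<Sum>q\<in>A. (draw x t q - e)^2) / real (card A)"
      unfolding cond_var_def cond_exp_def[of N x J "\<lambda>q. (draw x t q - cond_exp N x J (draw x t) q)^2"]
      by (simp add: A_def[symmetric] ce cong: sum.cong)
    also have "e = sum (\<lambda>q. x (q t)) A / real (card A)"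
      by (simp add: e_def cond_exp_def A_def draw_def)
    finally show ?thesis by (simp add: draw_def[abs_def])
  qed
  have perm_of: "q permutes {1..N}" if "q \<in> A" for q
    using that by (simp add: A_def atom_def perms_def)
  have Jq: "x (q i) = x (p i)" if "q \<in> A" "i \<in> J" for q i
    using that by (simp add: A_def atom_def draw_def)
  have sym: "(\<Sum>q\<in>A. (x (q t) - c)^2) = (\<Sum>q\<in>A. (x (q l) - c)^2)" if l: "l \<in> R" for l
  proof -
    let ?tr = "Transposition.transpose t l"
    have trp: "?tr permutes {1..N}" using t l by (intro permutes_swap_id) (auto simp: R_def)
    have lJ: "l \<notin> J" using l by (simp add: R_def)
    have mem: "q \<circ> ?tr \<in> A" if "q \<in> A" for q
    proof -
      have "q \<circ> ?tr permutes {1..N}" by (rule permutes_compose[OF trp perm_of[OF that]])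
      moreover have "\<forall>i\<in>J. x ((q \<circ> ?tr) i) = x (p i)"
      proof
        fix i assume "i \<in> J"
        then have "i \<noteq> t" "i \<noteq> l" using t lJ by auto
        then have "(q \<circ> ?tr) i = q i" by (simp add: transpose_def)
        then show "x ((q \<circ> ?tr) i) = x (p i)" using Jq[OF that \<open>i \<in> J\<close>] by simp
      qed
      ultimately show ?thesis by (simp add: A_def atom_def perms_def draw_def)
    qed
    have inv: "q \<circ> ?tr \<circ> ?tr = q" for q :: "nat \<Rightarrow> nat"
      by (simp add: o_assoc[symmetric])
    show ?thesis
      by (rule sum.reindex_bij_witness[of _ "\<lambda>q. q \<circ> ?tr" "\<lambda>q. q \<circ> ?tr"])
         (simp_all add: mem inv)
  qed
  have rowsum: "(\<Sum>l\<in>R. (x (q l) - c)^2) = (\<Sum>l\<in>R. (x (p l) - c)^2)" if "q \<in> A" for q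
  proof -
    have "(\<Sum>l\<in>{1..N}. (x (q l) - c)^2) = (\<Sum>l\<in>{1..N}. (x (p l) - c)^2)"
      using sum_perm_eq[OF perm_of[OF that], of "\<lambda>v. (x v - c)^2"]
        sum_perm_eq[OF perm_of[OF pA], of "\<lambda>v. (x v - c)^2"] by simp
    moreover have "(\<Sum>l\<in>J. (x (q l) - c)^2) = (\<Sum>l\<in>J. (x (p l) - c)^2)"
      using Jq[OF that] by simp
    ultimately show ?thesis using J by (simp add: R_def sum_diff)
  qed
  have key: "real (card R) * (\<Sum>q\<in>A. (x (q t) - c)^2) = real (card A) * (\<Sum>l\<in>R. (x (p l) - c)^2)"
  proof -
    have "real (card R) * (\<Sum>q\<in>A. (x (q t) - c)^2) = (\<Sum>l\<in>R. \<Sum>q\<in>A. (x (q l) - c)^2)"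
    proof -
      have "(\<Sum>l\<in>R. \<Sum>q\<in>A. (x (q l) - c)^2) = (\<Sum>l\<in>R. \<Sum>q\<in>A. (x (q t) - c)^2)"
      proof (rule sum.cong[OF refl])
        fix l assume "l \<in> R" then show "(\<Sum>q\<in>A. (x (q l) - c)^2) = (\<Sum>q\<in>A. (x (q t) - c)^2)"
          by (rule sym[symmetric])
      qed
      then show ?thesis by simp
    qed
    also have "\<dots> = (\<Sum>q\<in>A. \<Sum>l\<in>R. (x (q l) - c)^2)" by (rule sum.swap)
    also have "\<dots> = (\<Sum>q\<in>A. \<Sum>l\<in>R. (x (p l) - c)^2)" using rowsum by simp
    also have "\<dots> = real (card A) * (\<Sum>l\<in>R. (x (p l) - c)^2)" by simp
    finally show ?thesis .
  qed
  have "cond_var N x J (draw x t) p \<le> (\<Sum>q\<in>A. (x (q t) - c)^2) / real (card A)"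
    unfolding cv using var_le_sq[OF finA Ane, of "\<lambda>q. x (q t)" c] cA
    by (intro divide_right_mono) auto
  also have "\<dots> = (\<Sum>l\<in>R. (x (p l) - c)^2) / real (card R)"
    using key cA cR by (simp add: field_simps)
  finally show ?thesis by (simp add: R_def)
qed




lemma mgf:
  fixes y :: "nat \<Rightarrow> real"
  assumes r: "r < N" and lam: "0 \<le> lam" and y0: "\<And>i. i \<in> {1..N} \<Longrightarrow> 0 \<le> y i"
    and yc: "\<And>i. i \<in> {1..N} \<Longrightarrow> (y i)^2 \<le> c2 * y i"
  shows "(\<Sum>p\<in>{p. p permutes {1..N}}. exp (lam * Zr N y 1 r p))
     \<le> real (card {p. p permutes {1..N}}) *
        exp (lam * ((\<Sum>i\<in>{1..N}. y i) / real N) + real r * lam^2 * c2 * ((\<Sum>i\<in>{1..N}. y i) / real N) / (2 * (real N - real r)^2))"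
proof -
  let ?P = "{p. p permutes {1..N}}"
  define M where "M = real N - real r"
  define Q where "Q = (\<Sum>i\<in>{1..N}. y i)"
  define Z0 where "Z0 = Q / real N"
  define a where "a = lam / M"
  define h where "h = (\<lambda>i. exp (- a * y i))"
  have M0: "0 < M" using r by (simp add: M_def)
  have N0: "0 < real N" using r by simp
  have a0: "0 \<le> a" using lam M0 by (simp add: a_def)
  have Mdef: "real (Suc N - (1 + r)) = M" using r by (simp add: M_def of_nat_diff)
  have Zeq: "exp (lam * Zr N y 1 r p) = exp (lam * Q / M) * (\<Prod>l\<in>{1..<1+r}. h (p l))" if "p \<in> ?P" for p
  proof -
    have pp: "p permutes {1..N}" using that by simp
    have un: "{1..N} = {1..<1+r} \<union> {1+r..N}" using r by auto
    have "Q = (\<Sum>l\<in>{1..N}. y (p l))" using sum_perm_eq[OF pp, of y] by (simp add: Q_def)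
    also have "\<dots> = (\<Sum>l\<in>{1..<1+r}. y (p l)) + (\<Sum>l\<in>{1+r..N}. y (p l))"
      by (subst un, rule sum.union_disjoint) auto
    finally have S: "(\<Sum>l\<in>{1+r..N}. y (p l)) = Q - (\<Sum>l\<in>{1..<1+r}. y (p l))" by simp
    have Z: "Zr N y 1 r p = (Q - (\<Sum>l\<in>{1..<1+r}. y (p l))) / M"
      by (simp only: Zr_def Mdef S)
    have sd: "(\<Sum>l\<in>{1..<1+r}. - a * y (p l)) = - a * (\<Sum>l\<in>{1..<1+r}. y (p l))"
      by (rule sum_distrib_left[symmetric])
    have "lam * Zr N y 1 r p = lam * Q / M + (\<Sum>l\<in>{1..<1+r}. - a * y (p l))"
      unfolding Z sd using M0 by (simp add: a_def field_simps)
    then show ?thesis by (simp only: exp_add exp_sum[OF finite_atLeastLessThan] h_def)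
  qed
  have h0: "\<And>i. 0 \<le> h i" by (simp add: h_def)
  have P1: "(\<Sum>p\<in>?P. \<Prod>l\<in>{1..<1+r}. h (p l)) \<le> real (card ?P) * ((\<Sum>i\<in>{1..N}. h i) / real N)^r"
    using prodlem[of 1 r N h] h0 r by simp
  have hb: "h i \<le> 1 - a * y i + a^2 * c2 * y i / 2" if "i \<in> {1..N}" for i
  proof -
    have t0: "0 \<le> a * y i" using a0 y0[OF that] by simp
    have "h i \<le> 1 - a * y i + (a * y i)^2 / 2" unfolding h_def using exp_neg_le_quad[OF t0] by simp
    also have "(a * y i)^2 = a^2 * (y i)^2" by (simp add: power_mult_distrib)
    also have "a^2 * (y i)^2 \<le> a^2 * (c2 * y i)" using yc[OF that] by (intro mult_left_mono) auto
    finally show ?thesis by simp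
  qed
  have avg: "(\<Sum>i\<in>{1..N}. h i) / real N \<le> exp (- a * Z0 + a^2 * c2 * Z0 / 2)"
  proof -
    have "(\<Sum>i\<in>{1..N}. h i) \<le> (\<Sum>i\<in>{1..N}. 1 - a * y i + a^2 * c2 * y i / 2)"
      by (intro sum_mono hb)
    also have "\<dots> = real N - a * Q + a^2 * c2 * Q / 2"
      by (simp add: sum.distrib sum_subtractf sum_distrib_left[symmetric] sum_divide_distrib[symmetric] Q_def)
    finally have "(\<Sum>i\<in>{1..N}. h i) / real N \<le> (real N - a * Q + a^2 * c2 * Q / 2) / real N"
      using N0 by (intro divide_right_mono) auto
    also have "\<dots> = 1 + (- a * Z0 + a^2 * c2 * Z0 / 2)" using N0 by (simp add: Z0_def field_simps)
    also have "\<dots> \<le> exp (- a * Z0 + a^2 * c2 * Z0 / 2)" by (rule exp_ge_add_one_self)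
    finally show ?thesis .
  qed
  have avgr: "((\<Sum>i\<in>{1..N}. h i) / real N)^r \<le> exp (real r * (- a * Z0 + a^2 * c2 * Z0 / 2))"
  proof -
    have "((\<Sum>i\<in>{1..N}. h i) / real N)^r \<le> (exp (- a * Z0 + a^2 * c2 * Z0 / 2))^r"
    proof (rule power_mono[OF avg])
      have "0 \<le> (\<Sum>i\<in>{1..N}. h i)" by (intro sum_nonneg h0)
      then show "0 \<le> (\<Sum>i\<in>{1..N}. h i) / real N" by simp
    qed
    also have "\<dots> = exp (real r * (- a * Z0 + a^2 * c2 * Z0 / 2))" by (simp add: exp_of_nat_mult)
    finally show ?thesis .
  qed
  have "(\<Sum>p\<in>?P. exp (lam * Zr N y 1 r p)) = exp (lam * Q / M) * (\<Sum>p\<in>?P. \<Prod>l\<in>{1..<1+r}. h (p l))"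
    unfolding sum_distrib_left by (rule sum.cong[OF refl]) (rule Zeq)
  also have "\<dots> \<le> exp (lam * Q / M) * (real (card ?P) * exp (real r * (- a * Z0 + a^2 * c2 * Z0 / 2)))"
    using P1 avgr by (intro mult_left_mono order.trans[OF P1] mult_left_mono avgr) auto
  also have "\<dots> = real (card ?P) * exp (lam * Q / M + real r * (- a * Z0 + a^2 * c2 * Z0 / 2))"
    by (simp add: exp_add)
  also have "lam * Q / M + real r * (- a * Z0 + a^2 * c2 * Z0 / 2) = lam * Z0 + real r * lam^2 * c2 * Z0 / (2 * M^2)"
  proof -
    have QZ: "Q = real N * Z0" using N0 by (simp add: Z0_def)
    have NM: "real N = M + real r" by (simp add: M_def)
    show ?thesis using M0 unfolding QZ a_def NM by (simp add: field_simps power2_eq_square)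
  qed
  finally show ?thesis by (simp add: Q_def Z0_def M_def)
qed




lemma prob_from_count:
  assumes fin: "finite S" and ne: "S \<noteq> {}"
    and BG: "\<And>p. p \<in> S \<Longrightarrow> \<not> G p \<Longrightarrow> B p"
    and cnt: "(\<Sum>p\<in>S. if B p then 1 else 0) \<le> \<delta> * real (card S)"
  shows "measure_pmf.prob (pmf_of_set S) {p. G p} \<ge> 1 - \<delta>"
proof -
  have cS: "0 < real (card S)" using fin ne by (simp add: card_gt_0_iff)
  have m: "measure_pmf.prob (pmf_of_set S) {p. G p} = real (card (S \<inter> {p. G p})) / real (card S)"
    by (rule measure_pmf_of_set[OF ne fin])
  have split: "card S = card (S \<inter> {p. G p}) + card {p\<in>S. \<not> G p}"
  proof -
    have "S = (S \<inter> {p. G p}) \<union> {p\<in>S. \<not> G p}" by auto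
    moreover have "card ((S \<inter> {p. G p}) \<union> {p\<in>S. \<not> G p}) = card (S \<inter> {p. G p}) + card {p\<in>S. \<not> G p}"
      using fin by (intro card_Un_disjoint) auto
    ultimately show ?thesis by simp
  qed
  have "card {p\<in>S. \<not> G p} \<le> card {p\<in>S. B p}"
    using fin BG by (intro card_mono) auto
  moreover have "real (card {p\<in>S. B p}) = (\<Sum>p\<in>S. if B p then 1 else 0)"
    using fin by (simp add: sum.If_cases Int_def)
  ultimately have "real (card {p\<in>S. \<not> G p}) \<le> \<delta> * real (card S)" using cnt
    by (metis (no_types, lifting) of_nat_le_iff order_trans)
  then have "real (card S) - \<delta> * real (card S) \<le> real (card (S \<inter> {p. G p}))"
    using split by simp
  then have "(real (card S) - \<delta> * real (card S)) / real (card S) \<le> real (card (S \<inter> {p. G p})) / real (card S)"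
    using cS by (intro divide_right_mono) auto
  moreover have "(real (card S) - \<delta> * real (card S)) / real (card S) = 1 - \<delta>"
    using cS by (simp add: field_simps)
  ultimately show ?thesis using m by simp
qed

lemma choose_lam:
  fixes s2 c L rr M :: real
  assumes s: "0 < s2" and c: "0 < c" and L: "0 < L" and rr: "0 < rr" and M: "0 < M"
  defines "\<epsilon> \<equiv> sqrt s2 * c * rr / M * sqrt (2 * L / rr)"
  defines "lam \<equiv> \<epsilon> * M^2 / (rr * c^2 * s2)"
  shows "0 \<le> lam" "- lam * (s2 + \<epsilon>) + (lam * s2 + rr * lam^2 * c^2 * s2 / (2 * M^2)) = - L"
proof -
  have e0: "0 \<le> \<epsilon>" using s c L rr M by (simp add: \<epsilon>_def)
  then show "0 \<le> lam" using s c rr M by (simp add: lam_def)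
  have e2: "\<epsilon>^2 = 2 * s2 * c^2 * rr * L / M^2"
  proof -
    have "\<epsilon>^2 = (sqrt s2)^2 * c^2 * rr^2 / M^2 * (sqrt (2 * L / rr))^2"
      by (simp add: \<epsilon>_def power_mult_distrib power_divide)
    also have "\<dots> = s2 * c^2 * rr^2 / M^2 * (2 * L / rr)"
      using s L rr by (simp add: real_sqrt_pow2)
    also have "\<dots> = 2 * s2 * c^2 * rr * L / M^2" using rr by (simp add: field_simps power2_eq_square)
    finally show ?thesis .
  qed
  have "- lam * (s2 + \<epsilon>) + (lam * s2 + rr * lam^2 * c^2 * s2 / (2 * M^2)) = - (\<epsilon>^2 * M^2 / (2 * rr * c^2 * s2))"
    using s c rr M by (simp add: lam_def field_simps power2_eq_square)
  also have "\<dots> = - L" using s c rr M unfolding e2 by (simp add: field_simps power2_eq_square)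
  finally show "- lam * (s2 + \<epsilon>) + (lam * s2 + rr * lam^2 * c^2 * s2 / (2 * M^2)) = - L" .
qed

lemma tail:
  fixes y :: "nat \<Rightarrow> real"
  assumes r: "1 \<le> r" "r < N" and y0: "\<And>i. i \<in> {1..N} \<Longrightarrow> 0 \<le> y i"
    and yc: "\<And>i. i \<in> {1..N} \<Longrightarrow> (y i)^2 \<le> c^2 * y i"
    and c: "0 < c" and s: "0 < (\<Sum>i\<in>{1..N}. y i) / real N" and L: "0 < L"
    and T: "T = (\<Sum>i\<in>{1..N}. y i) / real N + sqrt ((\<Sum>i\<in>{1..N}. y i) / real N) * c * real r / (real N - real r) * sqrt (2 * L / real r)"
  shows "(\<Sum>p\<in>{p. p permutes {1..N}}. if (\<exists>j\<le>r. T < Zr N y 1 j p) then 1 else 0)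
         \<le> exp (- L) * real (card {p. p permutes {1..N}})"
proof -
  let ?P = "{p. p permutes {1..N}}"
  define s2 where "s2 = (\<Sum>i\<in>{1..N}. y i) / real N"
  define M where "M = real N - real r"
  define \<epsilon> where "\<epsilon> = sqrt s2 * c * real r / M * sqrt (2 * L / real r)"
  define lam where "lam = \<epsilon> * M^2 / (real r * c^2 * s2)"
  have rr: "0 < real r" using r by simp
  have M0: "0 < M" using r by (simp add: M_def)
  have s0: "0 < s2" using s by (simp add: s2_def)
  have lam0: "0 \<le> lam" and ex: "- lam * (s2 + \<epsilon>) + (lam * s2 + real r * lam^2 * c^2 * s2 / (2 * M^2)) = - L"
    using choose_lam[OF s0 c L rr M0] by (simp_all add: \<epsilon>_def lam_def)
  have T': "T = s2 + \<epsilon>" by (simp add: T s2_def \<epsilon>_def M_def)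
  have "(\<Sum>p\<in>?P. if (\<exists>j\<le>r. T < Zr N y 1 j p) then 1 else 0) \<le> exp (- lam * T) * (\<Sum>p\<in>?P. exp (lam * Zr N y 1 r p))"
    using doob[of 1 r N lam T y] r lam0 by simp
  also have "\<dots> \<le> exp (- lam * T) * (real (card ?P) * exp (lam * s2 + real r * lam^2 * c^2 * s2 / (2 * M^2)))"
    using mgf[of r N lam y "c^2"] r lam0 y0 yc by (intro mult_left_mono) (simp_all add: s2_def M_def)
  also have "\<dots> = real (card ?P) * exp (- lam * (s2 + \<epsilon>) + (lam * s2 + real r * lam^2 * c^2 * s2 / (2 * M^2)))"
    unfolding T' exp_add by (simp only: ac_simps)
  also have "\<dots> = exp (- L) * real (card ?P)" unfolding ex by (rule mult.commute)
  finally show ?thesis .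
qed




lemma pop_bounds:
  assumes "1 \<le> N"
  shows "\<And>i. i \<in> {1..N} \<Longrightarrow> pop_min N x \<le> x i"
    and "\<And>i. i \<in> {1..N} \<Longrightarrow> x i \<le> pop_max N x"
    and "pop_min N x \<le> pop_mean N x" and "pop_mean N x \<le> pop_max N x"
proof -
  show mn: "\<And>i. i \<in> {1..N} \<Longrightarrow> pop_min N x \<le> x i" by (simp add: pop_min_def)
  show mx: "\<And>i. i \<in> {1..N} \<Longrightarrow> x i \<le> pop_max N x" by (simp add: pop_max_def)
  have N0: "0 < real N" using assms by simp
  have "real (card {1..N}) * pop_min N x \<le> (\<Sum>i\<in>{1..N}. x i)"
    by (rule sum_bounded_below) (rule mn)
  then show "pop_min N x \<le> pop_mean N x" using N0 by (simp add: pop_mean_def field_simps)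
  have "(\<Sum>i\<in>{1..N}. x i) \<le> real (card {1..N}) * pop_max N x"
    by (rule sum_bounded_above) (rule mx)
  then show "pop_mean N x \<le> pop_max N x" using N0 by (simp add: pop_mean_def field_simps)
qed

lemma sq_bounds:
  fixes x :: "nat \<Rightarrow> real" and N i :: nat
  assumes "1 \<le> N" "i \<in> {1..N}"
  defines "c \<equiv> pop_max N x - pop_min N x"
  shows "(x i - pop_mean N x)^2 \<le> c^2" "((x i - pop_mean N x)^2)^2 \<le> c^2 * (x i - pop_mean N x)^2" "0 \<le> c"
proof -
  note b = pop_bounds[OF assms(1), where x=x]
  have a: "\<bar>x i - pop_mean N x\<bar> \<le> c" using b(1)[OF assms(2)] b(2)[OF assms(2)] b(3) b(4)
    by (simp add: c_def abs_le_iff)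
  then show c0: "0 \<le> c" by simp
  show q: "(x i - pop_mean N x)^2 \<le> c^2"
    using a by (metis abs_ge_zero power2_abs power_mono)
  show "((x i - pop_mean N x)^2)^2 \<le> c^2 * (x i - pop_mean N x)^2"
  proof -
    have gen: "v^2 \<le> c^2 * v" if "v \<le> c^2" "0 \<le> v" for v :: real
      using mult_right_mono[OF that] by (simp add: power2_eq_square)
    show ?thesis by (rule gen[OF q]) simp
  qed
qed

lemma perms_nonempty: "perms N \<noteq> {}"
proof -
  have "id \<in> perms N" by (simp add: perms_def permutes_id)
  then show ?thesis by blast
qed

lemma main_gen:
  fixes \<phi> :: "(nat \<Rightarrow> nat) \<Rightarrow> (nat \<Rightarrow> nat)"
  assumes N: "2 \<le> N" and d: "0 < \<delta>" "\<delta> \<le> 1" and r: "1 \<le> r" "r < N"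
    and phi: "\<And>f :: (nat \<Rightarrow> nat) \<Rightarrow> real. (\<Sum>p\<in>perms N. f (\<phi> p)) = (\<Sum>p\<in>perms N. f p)"
    and bad: "\<And>p. p \<in> perms N \<Longrightarrow> \<not> G p \<Longrightarrow> \<exists>j\<le>r. T < Zr N (\<lambda>i. (x i - pop_mean N x)^2) 1 j (\<phi> p)"
    and T: "T = pop_var N x + sqrt (pop_var N x) * (pop_max N x - pop_min N x) * real r / (real N - real r)
               * sqrt (2 * ln (1 / \<delta>) / real r)"
  shows "measure_pmf.prob (perm_pmf N) {p. G p} \<ge> 1 - \<delta>"
proof -
  define y where "y = (\<lambda>i. (x i - pop_mean N x)^2)"
  define c where "c = pop_max N x - pop_min N x"
  define L where "L = ln (1 / \<delta>)"
  have N1: "1 \<le> N" using N by simp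
  have s2: "pop_var N x = (\<Sum>i\<in>{1..N}. y i) / real N" by (simp add: pop_var_def y_def)
  have y0: "\<And>i. 0 \<le> y i" by (simp add: y_def)
  have yc: "\<And>i. i \<in> {1..N} \<Longrightarrow> (y i)^2 \<le> c^2 * y i" using sq_bounds[OF N1] by (simp add: y_def c_def)
  have yc2: "\<And>i. i \<in> {1..N} \<Longrightarrow> y i \<le> c^2" using sq_bounds[OF N1] by (simp add: y_def c_def)
  have c0: "0 \<le> c" using sq_bounds(3)[of N 1 x] N1 by (simp add: c_def)
  have L0: "0 \<le> L" using d by (simp add: L_def)
  let ?B = "\<lambda>p. \<exists>j\<le>r. T < Zr N y 1 j (\<phi> p)"
  have fin: "finite (perms N)" by (rule finite_perms)
  have cnt_eq: "(\<Sum>p\<in>perms N. if ?B p then 1 else 0) = (\<Sum>p\<in>perms N. if (\<exists>j\<le>r. T < Zr N y 1 j p) then 1 else (0::real))"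
    by (rule phi[of "\<lambda>q. if (\<exists>j\<le>r. T < Zr N y 1 j q) then 1 else 0"])
  have cnt: "(\<Sum>p\<in>perms N. if ?B p then 1 else 0) \<le> \<delta> * real (card (perms N))"
  proof (cases "L = 0")
    case True
    then have "\<delta> = 1" using d by (simp add: L_def)
    moreover have "(\<Sum>p\<in>perms N. if ?B p then 1 else 0) \<le> (\<Sum>p\<in>perms N. (1::real))"
      by (intro sum_mono) auto
    ultimately show ?thesis by simp
  next
    case False
    then have L1: "0 < L" using L0 by simp
    show ?thesis
    proof (cases "pop_var N x = 0")
      case True
      then have "(\<Sum>i\<in>{1..N}. y i) = 0" using s2 N1 by simp
      then have yz: "\<And>i. i \<in> {1..N} \<Longrightarrow> y i = 0" using y0 by (simp add: sum_nonneg_eq_0_iff)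
      have Tz: "T = 0" using True by (simp add: T)
      have "\<not> (\<exists>j\<le>r. T < Zr N y 1 j p)" if "p \<in> perms N" for p
      proof -
        have "Zr N y 1 j p = 0" for j
        proof -
          have pp: "p permutes {1..N}" using that by (simp add: perms_def)
          have "y (p l) = 0" if l: "l \<in> {1+j..N}" for l
          proof -
            have "l \<in> {1..N}" using l by auto
            then have "p l \<in> {1..N}" by (simp only: permutes_in_image[OF pp])
            then show ?thesis by (rule yz)
          qed
          then show ?thesis by (simp add: Zr_def)
        qed
        then show ?thesis using Tz by simp
      qed
      then have "(\<Sum>p\<in>perms N. if (\<exists>j\<le>r. T < Zr N y 1 j p) then 1 else (0::real)) = 0"
        by (intro sum.neutral) auto
      then show ?thesis using cnt_eq d by simp
    next
      case False
      have sp: "0 < (\<Sum>i\<in>{1..N}. y i) / real N"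
        using False s2 y0 pop_var_def[of N x] by (metis order_le_less sum_nonneg divide_nonneg_nonneg of_nat_0_le_iff)
      have cp: "0 < c"
      proof -
        have "(\<Sum>i\<in>{1..N}. y i) \<le> (\<Sum>i\<in>{1..N}. c^2)" by (intro sum_mono yc2) auto
        then have "(\<Sum>i\<in>{1..N}. y i) / real N \<le> c^2" using N1 by (simp add: divide_le_eq mult.commute)
        then have "0 < c^2" using sp by linarith
        then show ?thesis using c0 by (simp add: order_le_less)
      qed
      have "(\<Sum>p\<in>{p. p permutes {1..N}}. if (\<exists>j\<le>r. T < Zr N y 1 j p) then 1 else 0)
            \<le> exp (- L) * real (card {p. p permutes {1..N}})"
        by (rule tail[OF r _ yc cp sp L1]) (auto simp: y0 T s2 c_def L_def)
      moreover have "exp (- L) = \<delta>" using d by (simp add: L_def ln_div exp_minus)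
      ultimately show ?thesis using cnt_eq by (simp add: perms_def)
    qed
  qed
  show ?thesis unfolding perm_pmf_def
    by (rule prob_from_count[OF fin perms_nonempty _ cnt]) (use bad in \<open>auto simp: y_def\<close>)
qed




lemma fwd_le:
  assumes p: "p \<in> perms N" and k: "1 \<le> k" "k \<le> N"
  shows "var_fwd N x k p \<le> Zr N (\<lambda>i. (x i - c)^2) 1 (k - 1) p"
proof -
  have "var_fwd N x k p \<le> (\<Sum>l\<in>{1..N}-{1..<k}. (x (p l) - c)^2) / real (card ({1..N}-{1..<k}))"
    unfolding var_fwd_def using k by (intro cv_bound[OF p]) auto
  also have "{1..N}-{1..<k} = {1 + (k - 1)..N}" using k by auto
  also have "card {1 + (k - 1)..N} = Suc N - (1 + (k - 1))" by simp
  finally show ?thesis by (simp add: Zr_def)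
qed

definition rv :: "nat \<Rightarrow> nat \<Rightarrow> nat" where
  "rv N l = (if l \<in> {1..N} then Suc N - l else l)"

lemma rv_rv: "rv N (rv N l) = l"
  by (auto simp: rv_def)

lemma rv_perm: "rv N permutes {1..N}"
proof (rule bij_imp_permutes)
  show "bij_betw (rv N) {1..N} {1..N}"
    by (rule bij_betw_byWitness[where f' = "rv N"]) (auto simp: rv_def)
  show "\<And>l. l \<notin> {1..N} \<Longrightarrow> rv N l = l" by (simp add: rv_def del: atLeastAtMost_iff)
qed

lemma phi_rev: "(\<Sum>p\<in>perms N. f (p \<circ> rv N)) = (\<Sum>p\<in>perms N. f p)"
proof -
  have inv: "p \<circ> rv N \<circ> rv N = p" for p :: "nat \<Rightarrow> nat" by (auto simp: rv_rv)
  have mem: "p \<circ> rv N \<in> perms N" if "p \<in> perms N" for p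
    using that permutes_compose[OF rv_perm] by (simp add: perms_def)
  show ?thesis
    by (rule sum.reindex_bij_witness[of _ "\<lambda>p. p \<circ> rv N" "\<lambda>p. p \<circ> rv N"]) (simp_all add: inv mem)
qed

lemma bwd_le:
  assumes p: "p \<in> perms N" and k: "k + 1 \<le> N"
  shows "var_bwd N x (k + 1) p \<le> Zr N (\<lambda>i. (x i - c)^2) 1 (N - k - 1) (p \<circ> rv N)"
proof -
  have "var_bwd N x (k + 1) p \<le> (\<Sum>l\<in>{1..N}-{k+1<..N}. (x (p l) - c)^2) / real (card ({1..N}-{k+1<..N}))"
    unfolding var_bwd_def using k by (intro cv_bound[OF p]) auto
  also have "{1..N}-{k+1<..N} = {1..k+1}" using k by auto
  also have "(\<Sum>l\<in>{1..k+1}. (x (p l) - c)^2) = (\<Sum>l\<in>{1 + (N - k - 1)..N}. (x ((p \<circ> rv N) l) - c)^2)"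
    by (rule sum.reindex_bij_witness[of _ "\<lambda>l. Suc N - l" "\<lambda>l. Suc N - l"]) (use k in \<open>auto simp: rv_def\<close>)
  also have "card {1..k+1} = Suc N - (1 + (N - k - 1))" using k by simp
  finally show ?thesis by (simp add: Zr_def)
qed


theorem lemma6:
  fixes N n :: nat and x :: "nat \<Rightarrow> real" and \<delta> :: real
  assumes "2 \<le> N" and "0 < \<delta>" and "\<delta> \<le> 1"
  shows "(2 \<le> n \<and> n \<le> N \<longrightarrow>
           measure_pmf.prob (perm_pmf N)
             {p. (MAX k\<in>{1..n}. var_fwd N x k p)
                 \<le> pop_var N x + sqrt (pop_var N x) * (pop_max N x - pop_min N x) * (real n - 1)
                    / (real N - real n + 1) * sqrt (2 * ln (1 / \<delta>) / (real n - 1))}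
           \<ge> 1 - \<delta>)
       \<and> (1 \<le> n \<and> n + 2 \<le> N \<longrightarrow>
           measure_pmf.prob (perm_pmf N)
             {p. (MAX k\<in>{n..N-1}. var_bwd N x (k + 1) p)
                 \<le> pop_var N x + sqrt (pop_var N x) * (pop_max N x - pop_min N x) * (real N - real n - 1)
                    / (real n + 1) * sqrt (2 * ln (1 / \<delta>) / (real N - real n - 1))}
           \<ge> 1 - \<delta>)"
proof (intro conjI impI)
  assume n: "2 \<le> n \<and> n \<le> N"
  define T where "T = pop_var N x + sqrt (pop_var N x) * (pop_max N x - pop_min N x) * (real n - 1)
                    / (real N - real n + 1) * sqrt (2 * ln (1 / \<delta>) / (real n - 1))"
  have rn: "real (n - 1) = real n - 1" using n by (simp add: of_nat_diff)
  have "measure_pmf.prob (perm_pmf N) {p. (MAX k\<in>{1..n}. var_fwd N x k p) \<le> T} \<ge> 1 - \<delta>"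
  proof (rule main_gen[where \<phi> = id and r = "n - 1"])
    show "2 \<le> N" "0 < \<delta>" "\<delta> \<le> 1" using assms by auto
    show "1 \<le> n - 1" "n - 1 < N" using n by auto
    show "\<And>f :: (nat \<Rightarrow> nat) \<Rightarrow> real. (\<Sum>p\<in>perms N. f (id p)) = (\<Sum>p\<in>perms N. f p)" by simp
    show "T = pop_var N x + sqrt (pop_var N x) * (pop_max N x - pop_min N x) * real (n - 1) / (real N - real (n - 1))
               * sqrt (2 * ln (1 / \<delta>) / real (n - 1))"
      unfolding T_def rn by (simp add: algebra_simps)
    fix p assume p: "p \<in> perms N" and nG: "\<not> (MAX k\<in>{1..n}. var_fwd N x k p) \<le> T"
    then obtain k where k: "k \<in> {1..n}" "T < var_fwd N x k p"
      using n by (auto simp: Max_le_iff not_le)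
    have "var_fwd N x k p \<le> Zr N (\<lambda>i. (x i - pop_mean N x)^2) 1 (k - 1) p"
      using k n by (intro fwd_le[OF p]) auto
    then show "\<exists>j\<le>n - 1. T < Zr N (\<lambda>i. (x i - pop_mean N x)^2) 1 j (id p)"
      using k by (intro exI[of _ "k - 1"]) auto
  qed
  then show "measure_pmf.prob (perm_pmf N)
             {p. (MAX k\<in>{1..n}. var_fwd N x k p)
                 \<le> pop_var N x + sqrt (pop_var N x) * (pop_max N x - pop_min N x) * (real n - 1)
                    / (real N - real n + 1) * sqrt (2 * ln (1 / \<delta>) / (real n - 1))}
           \<ge> 1 - \<delta>" by (simp only: T_def)
next
  assume n: "1 \<le> n \<and> n + 2 \<le> N"
  define T where "T = pop_var N x + sqrt (pop_var N x) * (pop_max N x - pop_min N x) * (real N - real n - 1)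
                    / (real n + 1) * sqrt (2 * ln (1 / \<delta>) / (real N - real n - 1))"
  have rn: "real (N - n - 1) = real N - real n - 1" using n by (simp add: of_nat_diff)
  have "measure_pmf.prob (perm_pmf N) {p. (MAX k\<in>{n..N-1}. var_bwd N x (k + 1) p) \<le> T} \<ge> 1 - \<delta>"
  proof (rule main_gen[where \<phi> = "\<lambda>p. p \<circ> rv N" and r = "N - n - 1"])
    show "2 \<le> N" "0 < \<delta>" "\<delta> \<le> 1" using assms by auto
    show "1 \<le> N - n - 1" "N - n - 1 < N" using n by auto
    show "\<And>f :: (nat \<Rightarrow> nat) \<Rightarrow> real. (\<Sum>p\<in>perms N. f (p \<circ> rv N)) = (\<Sum>p\<in>perms N. f p)"
      by (rule phi_rev)
    show "T = pop_var N x + sqrt (pop_var N x) * (pop_max N x - pop_min N x) * real (N - n - 1) / (real N - real (N - n - 1))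
               * sqrt (2 * ln (1 / \<delta>) / real (N - n - 1))"
      unfolding T_def rn by (simp add: algebra_simps)
    fix p assume p: "p \<in> perms N" and nG: "\<not> (MAX k\<in>{n..N-1}. var_bwd N x (k + 1) p) \<le> T"
    have ne: "{n..N-1} \<noteq> {}" using n by auto
    have "\<exists>k\<in>{n..N-1}. T < var_bwd N x (k + 1) p"
      using nG Max_le_iff[of "(\<lambda>k. var_bwd N x (k + 1) p) ` {n..N-1}" T] ne by force
    then obtain k where k: "k \<in> {n..N-1}" "T < var_bwd N x (k + 1) p" by blast
    have "var_bwd N x (k + 1) p \<le> Zr N (\<lambda>i. (x i - pop_mean N x)^2) 1 (N - k - 1) (p \<circ> rv N)"
      using k n by (intro bwd_le[OF p]) auto
    then show "\<exists>j\<le>N - n - 1. T < Zr N (\<lambda>i. (x i - pop_mean N x)^2) 1 j (p \<circ> rv N)"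
      using k by (intro exI[of _ "N - k - 1"]) auto
  qed
  then show "measure_pmf.prob (perm_pmf N)
             {p. (MAX k\<in>{n..N-1}. var_bwd N x (k + 1) p)
                 \<le> pop_var N x + sqrt (pop_var N x) * (pop_max N x - pop_min N x) * (real N - real n - 1)
                    / (real n + 1) * sqrt (2 * ln (1 / \<delta>) / (real N - real n - 1))}
           \<ge> 1 - \<delta>" by (simp only: T_def)
qed


end
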